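(* Let $A$ be a ring and let $Y$ be an infinite subset of $\operatorname{Spec}(A)$ such that every nonzero element of $A$ belongs to only finitely many prime ideals in $Y$. Then $A$ is an integral domain and $\operatorname{Cl}^c(Y)=Y\cup\{(0)\}$.
   Context: Rings are commutative with identity. The constructible topology on $\operatorname{Spec}(A)$ is the coarsest topology in which every set $D(f)=\{\mathfrak p\in\operatorname{Spec}(A): f\notin\mathfrak p\}$, $f\in A$, is clopen; $\operatorname{Cl}^c(Y)$ denotes closure of $Y$ in this topology. *)

theory Defs
  imports "HOL-Analysis.Analysis" "HOL-Algebra.Algebra"
begin

definition Spec :: "('a, 'b) ring_scheme \<Rightarrow> 'a set set" where
  "Spec R = {P. primeideal P R}"

definition basicD :: "('a, 'b) ring_scheme \<Rightarrow> 'a \<Rightarrow> 'a set set" where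
  "basicD R f = {P \<in> Spec R. f \<notin> P}"

definition constructible_topology :: "('a, 'b) ring_scheme \<Rightarrow> 'a set topology" where
  "constructible_topology R =
     topology_generated_by ({basicD R f | f. f \<in> carrier R} \<union> {Spec R - basicD R f | f. f \<in> carrier R})"

end

theory Submission
  imports Defs
begin

lemma (in primeideal) one_notin: "\<one> \<notin> I"
  using I_notcarr one_imp_carrier by blast

lemma (in primeideal) zero_in: "\<zero> \<in> I"
  by (rule additive_subgroup.zero_closed[OF is_additive_subgroup])

lemma gen_open_zero:
  fixes A (structure)
  assumes dom: "domain A"
    and g: "generate_topology_on ({basicD A f | f. f \<in> carrier A} \<union> {Spec A - basicD A f | f. f \<in> carrier A}) U"
    and z: "{\<zero>} \<in> U"
  shows "\<exists>f\<in>carrier A. f \<noteq> \<zero> \<and> basicD A f \<subseteq> U"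
  using g z
proof (induction U rule: generate_topology_on.induct)
  case Empty
  then show ?case by simp
next
  case (Int a b)
  interpret domain A by (rule dom)
  from Int obtain f g where f: "f \<in> carrier A" "f \<noteq> \<zero>" "basicD A f \<subseteq> a"
    and g: "g \<in> carrier A" "g \<noteq> \<zero>" "basicD A g \<subseteq> b" by auto
  have "basicD A (f \<otimes> g) \<subseteq> basicD A f \<inter> basicD A g"
  proof
    fix P assume P: "P \<in> basicD A (f \<otimes> g)"
    then have pr: "primeideal P A" and nm: "f \<otimes> g \<notin> P" by (auto simp: basicD_def Spec_def)
    interpret primeideal P A by (rule pr)
    have "f \<notin> P" using nm f g I_r_closed by blast
    moreover have "g \<notin> P" using nm f g I_l_closed by blast
    ultimately show "P \<in> basicD A f \<inter> basicD A g" using P by (auto simp: basicD_def)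
  qed
  moreover have "f \<otimes> g \<noteq> \<zero>" using f g integral by blast
  ultimately show ?case using f g by (intro bexI[of _ "f \<otimes> g"]) auto
next
  case (UN K)
  then obtain k where "k \<in> K" "{\<zero>} \<in> k" by auto
  with UN show ?case by blast
next
  case (Basis s)
  interpret domain A by (rule dom)
  have zp: "{\<zero>} \<in> Spec A" using zeroprimeideal by (simp add: Spec_def)
  show ?case
  proof (cases "s \<in> {basicD A f | f. f \<in> carrier A}")
    case True
    then obtain g where g: "g \<in> carrier A" "s = basicD A g" by auto
    then have "g \<noteq> \<zero>" using Basis.prems by (auto simp: basicD_def)
    then show ?thesis using g by blast
  next
    case False
    with Basis.hyps obtain g where g: "g \<in> carrier A" "s = Spec A - basicD A g" by auto
    have "\<one> \<noteq> \<zero>" by simp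
    moreover have "basicD A \<one> \<subseteq> s"
    proof
      fix P assume "P \<in> basicD A \<one>"
      then have P: "P \<in> Spec A" by (simp add: basicD_def)
      from Basis.prems g have "g \<in> {\<zero>}" using zp by (auto simp: basicD_def)
      then have "g = \<zero>" by simp
      moreover have "\<zero> \<in> P" using P primeideal.zero_in by (auto simp: Spec_def)
      ultimately show "P \<in> s" using g P by (auto simp: basicD_def)
    qed
    ultimately show ?thesis by blast
  qed
qed

theorem lemma2p9:
  fixes A (structure)
  assumes "cring A"
    and "Y \<subseteq> Spec A"
    and "infinite Y"
    and "\<forall>a \<in> carrier A. a \<noteq> \<zero> \<longrightarrow> finite {P \<in> Y. a \<in> P}"
  shows "domain A \<and> constructible_topology A closure_of Y = Y \<union> {{\<zero>}}"
proof -
  interpret cring A by (rule assms(1))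
  note fin = assms(4)
  obtain P0 where P0: "P0 \<in> Y" using assms(3) by (metis ex_in_conv finite.emptyI)
  then have "primeideal P0 A" using assms(2) by (auto simp: Spec_def)
  then have one_ne: "\<one> \<noteq> \<zero>"
    using primeideal.one_notin primeideal.zero_in by metis
  have dom: "domain A"
  proof (intro zeroprimeideal_domainI primeidealI)
    show "ideal {\<zero>} A" by (rule zeroideal)
    show "cring A" by (rule assms(1))
    show "carrier A \<noteq> {\<zero>}" using one_ne one_closed by blast
    fix a b assume ab: "a \<in> carrier A" "b \<in> carrier A" "a \<otimes> b \<in> {\<zero>}"
    show "a \<in> {\<zero>} \<or> b \<in> {\<zero>}"
    proof (rule ccontr)
      assume "\<not> ?thesis"
      then have "a \<noteq> \<zero>" "b \<noteq> \<zero>" by auto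
      then have "finite ({P \<in> Y. a \<in> P} \<union> {P \<in> Y. b \<in> P})" using fin ab by auto
      moreover have "Y \<subseteq> {P \<in> Y. a \<in> P} \<union> {P \<in> Y. b \<in> P}"
      proof
        fix P assume "P \<in> Y"
        then have "primeideal P A" using assms(2) by (auto simp: Spec_def)
        then have "\<zero> \<in> P" by (rule primeideal.zero_in)
        then show "P \<in> {P \<in> Y. a \<in> P} \<union> {P \<in> Y. b \<in> P}"
          using \<open>P \<in> Y\<close> \<open>primeideal P A\<close> ab primeideal.I_prime by fastforce
      qed
      ultimately show False using assms(3) finite_subset by blast
    qed
  qed
  interpret D: domain A by (rule dom)
  define S where "S = {basicD A f | f. f \<in> carrier A} \<union> {Spec A - basicD A f | f. f \<in> carrier A}"
  have CT: "constructible_topology A = topology_generated_by S"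
    by (simp add: constructible_topology_def S_def)
  have top: "topspace (constructible_topology A) = Spec A"
  proof -
    have "\<Union>S \<subseteq> Spec A" by (auto simp: S_def basicD_def)
    moreover have "basicD A \<one> = Spec A"
    proof -
      have "\<one> \<notin> P" if "P \<in> Spec A" for P
        using that primeideal.one_notin by (auto simp: Spec_def)
      then show ?thesis by (auto simp: basicD_def)
    qed
    then have "Spec A \<subseteq> \<Union>S" by (auto simp: S_def)
    ultimately show ?thesis by (simp add: CT)
  qed
  have opD: "openin (constructible_topology A) (basicD A g)" if "g \<in> carrier A" for g
    unfolding CT by (rule topology_generated_by_Basis) (use that in \<open>auto simp: S_def\<close>)
  have opV: "openin (constructible_topology A) (Spec A - basicD A g)" if "g \<in> carrier A" for g
    unfolding CT by (rule topology_generated_by_Basis) (use that in \<open>auto simp: S_def\<close>)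
  have zp: "{\<zero>} \<in> Spec A" using D.zeroprimeideal by (simp add: Spec_def)
  have "Y \<subseteq> constructible_topology A closure_of Y"
    by (rule closure_of_subset) (simp add: top assms(2))
  moreover have "{\<zero>} \<in> constructible_topology A closure_of Y"
    unfolding in_closure_of top
  proof (intro conjI zp allI impI)
    fix T assume T: "{\<zero>} \<in> T \<and> openin (constructible_topology A) T"
    then have "generate_topology_on S T"
      unfolding CT by (simp add: openin_topology_generated_by_iff)
    then obtain f where f: "f \<in> carrier A" "f \<noteq> \<zero>" "basicD A f \<subseteq> T"
      using gen_open_zero[OF dom] T unfolding S_def by blast
    have "finite {P \<in> Y. f \<in> P}" using fin f by auto
    then have "Y - {P \<in> Y. f \<in> P} \<noteq> {}" using assms(3) by (metis Diff_eq_empty_iff finite_subset)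
    then obtain y where "y \<in> Y" "f \<notin> y" by auto
    then have "y \<in> basicD A f" using assms(2) by (auto simp: basicD_def)
    then show "\<exists>y. y \<in> Y \<and> y \<in> T" using f \<open>y \<in> Y\<close> by blast
  qed
  moreover have "Q \<in> Y \<union> {{\<zero>}}" if Q: "Q \<in> constructible_topology A closure_of Y" for Q
  proof (rule ccontr)
    assume nQ: "Q \<notin> Y \<union> {{\<zero>}}"
    have "Q \<in> topspace (constructible_topology A)" using Q by (simp only: in_closure_of)
    then have QS: "Q \<in> Spec A" by (simp only: top)
    then interpret Qp: primeideal Q A by (simp add: Spec_def)
    have "Q \<noteq> {\<zero>}" using nQ by auto
    moreover have "\<zero> \<in> Q" by (rule Qp.zero_in)
    ultimately obtain a where a: "a \<in> Q" "a \<noteq> \<zero>" by blast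
    have aC: "a \<in> carrier A" using a Qp.a_subset by blast
    define F where "F = {P \<in> Y. a \<in> P}"
    have finF: "finite F" using fin a aC by (simp add: F_def)
    have "\<exists>U. openin (constructible_topology A) U \<and> Q \<in> U \<and> P \<notin> U" if P: "P \<in> F" for P
    proof -
      have PY: "P \<in> Y" using P by (simp add: F_def)
      then have PS: "P \<in> Spec A" using assms(2) by auto
      have "P \<noteq> Q" using PY nQ by auto
      then show ?thesis
      proof (cases "P \<subseteq> Q")
        case False
        then obtain b where b: "b \<in> P" "b \<notin> Q" by blast
        have Pp: "primeideal P A" using PS by (simp add: Spec_def)
        have bC: "b \<in> carrier A" by (rule ideal.Icarr[OF primeideal.axioms(1)[OF Pp] b(1)])
        show ?thesis
          by (rule exI[of _ "basicD A b"]) (use opD[OF bC] b QS PS in \<open>auto simp: basicD_def\<close>)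
      next
        case True
        then obtain c where c: "c \<in> Q" "c \<notin> P" using \<open>P \<noteq> Q\<close> by blast
        have cC: "c \<in> carrier A" using c Qp.Icarr by blast
        show ?thesis
          by (rule exI[of _ "Spec A - basicD A c"]) (use opV[OF cC] c QS PS in \<open>auto simp: basicD_def\<close>)
      qed
    qed
    then obtain U where U: "\<And>P. P \<in> F \<Longrightarrow> openin (constructible_topology A) (U P) \<and> Q \<in> U P \<and> P \<notin> U P"
      by metis
    define W where "W = (Spec A - basicD A a) \<inter> \<Inter>(U ` F)"
    have "openin (constructible_topology A) W"
      unfolding W_def by (rule openin_Int_Inter) (use finF opV[OF aC] U in auto)
    moreover have "Q \<in> W" using U QS a by (auto simp: W_def basicD_def)
    moreover have "y \<notin> W" if "y \<in> Y" for y
    proof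
      assume yW: "y \<in> W"
      then have "a \<in> y" using that assms(2) by (auto simp: W_def basicD_def)
      then have "y \<in> F" using that by (simp add: F_def)
      then show False using U yW by (auto simp: W_def)
    qed
    ultimately show False using Q unfolding in_closure_of by blast
  qed
  ultimately have "constructible_topology A closure_of Y = Y \<union> {{\<zero>}}" by blast
  with dom show ?thesis by blast
qed

end
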